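(* Let $m\ge2$ be an integer and let $g\in C^\infty(\mathbb{R})$ with $g(0)>0$. Let $\tilde g\in C^\infty(\mathbb{R})$ satisfy, for some $0<\delta<1$: $\tilde g(x)=g(x)$ for $|x|\le\delta$, $\tilde g(x)=\frac9{10}g(0)$ for $|x|\ge1$, and $0\le -x\tilde g'(x)<\frac15 g(0)$, $|x^2\tilde g''(x)|<\frac15g(0)$ for all $x\in\mathbb{R}$; and suppose $\frac9{10}g(0)\le\tilde g\le g(0)$ on $\mathbb{R}$. Put $\hat g=\tilde g/g(0)$, $p(s,\tilde X)=\hat g(\tilde Xs)s^{2m}-s$, and let $\alpha\in C^\infty([0,\infty))$ be the function with $\frac{\partial p}{\partial s}(\alpha(\tilde X),\tilde X)=0$ and $(2m)^{-\frac1{2m-1}}\le\alpha(\tilde X)\le(\frac45\cdot2m)^{-\frac1{2m-1}}$ for all $\tilde X\ge0$. Define $a(\tilde X)=-p(\alpha(\tilde X),\tilde X)$. Then for all $\tilde X\ge0$, $$a(\tilde X)\ge a(0)=a:=(2m)^{-\frac1{2m-1}}-(2m)^{-\frac{2m}{2m-1}}.$$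
   Context: Existence (and uniqueness within the interval $[(2m)^{-1/(2m-1)},(\frac45 2m)^{-1/(2m-1)}]$, since $p$ is strictly convex in $s$ there) of such a smooth function $\alpha$ is part of the setting. *)

theory Defs
  imports "HOL-Analysis.Analysis"
begin

definition smooth_on :: "real set \<Rightarrow> (real \<Rightarrow> real) \<Rightarrow> bool" where
  "smooth_on S f \<longleftrightarrow> (\<exists>D :: nat \<Rightarrow> real \<Rightarrow> real. D 0 = f \<and>
     (\<forall>n. \<forall>x\<in>S. (D n has_real_derivative D (Suc n) x) (at x within S)))"

end

theory Submission imports Defs begin

lemma dq_lem:
  fixes D :: "nat \<Rightarrow> real \<Rightarrow> real" and G X t :: real and k :: nat
  assumes D: "\<And>n x. (D n has_real_derivative D (Suc n) x) (at x)"
    and G: "G > 0"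
  shows "((\<lambda>t. D 0 (X * t)/G * t^(k+2) - t) has_real_derivative
      (X * D 1 (X * t) * t^(k+2) + D 0 (X * t) * ((real k+2) * t^(k+1)))/G - 1) (at t)"
proof -
  have ch: "((\<lambda>t. D n (X * t)) has_real_derivative D (Suc n) (X * t) * X) (at t)" for n t
  proof -
    have "((\<lambda>t. X * t) has_real_derivative X) (at t)" by (auto intro!: derivative_eq_intros)
    from DERIV_chain2[where g="\<lambda>t. X * t", OF D[of n "X * t"] this] show ?thesis by simp
  qed
  show ?thesis
    apply (rule DERIV_cong)
     apply (auto intro!: derivative_eq_intros ch)[1]
    using G apply simp
    using G apply (cases k; simp add: field_simps)
    done
qed

lemma conv:
  fixes D :: "nat \<Rightarrow> real \<Rightarrow> real" and G X c s :: real and k :: nat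
  assumes D: "\<And>n x. (D n has_real_derivative D (Suc n) x) (at x)"
    and G: "G > 0" and X: "X \<ge> 0" and c: "0 < c" "c \<le> s"
    and d1: "\<And>y. 0 \<le> - y * D 1 y \<and> - y * D 1 y < G / 5"
    and d2: "\<And>y. \<bar>y^2 * D 2 y\<bar> < G / 5"
    and bd: "\<And>y. 9/10 * G \<le> D 0 y"
    and crit: "(X * D 1 (X * s) * s^(k+2) + D 0 (X * s) * ((real k+2) * s^(k+1)))/G - 1 = 0"
  shows "D 0 (X * s)/G * s^(k+2) - s \<le> D 0 (X * c)/G * c^(k+2) - c"
proof -
  define q where "q t = D 0 (X * t)/G * t^(k+2) - t" for t
  define q1 where "q1 t = (X * D 1 (X * t) * t^(k+2) + D 0 (X * t) * ((real k+2) * t^(k+1)))/G - 1" for t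
  define q2 where "q2 t = (X^2 * D 2 (X * t) * t^(k+2) + 2 * X * D 1 (X * t) * ((real k+2) * t^(k+1))
      + D 0 (X * t) * ((real k+2)*(real k+1)*t^k))/G" for t
  have ch: "((\<lambda>t. D n (X * t)) has_real_derivative D (Suc n) (X * t) * X) (at t)" for n t
  proof -
    have "((\<lambda>t. X * t) has_real_derivative X) (at t)" by (auto intro!: derivative_eq_intros)
    from DERIV_chain2[where g="\<lambda>t. X * t", OF D[of n "X * t"] this] show ?thesis by simp
  qed
  have hk1: "real k * t ^ (k - Suc 0) * t = real k * t ^ k" for t
    by (cases k) auto
  have hk1': "real k * (t ^ (k - Suc 0) * t) = real k * t ^ k" for t
    by (cases k) auto
  have dq: "(q has_real_derivative q1 t) (at t)" for t
    unfolding q_def q1_def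
    apply (rule DERIV_cong)
     apply (auto intro!: derivative_eq_intros ch)[1]
    using G apply simp
    using G apply (cases k; simp add: field_simps)
    done
  have dq1: "(q1 has_real_derivative q2 t) (at t)" for t
    unfolding q1_def q2_def
    apply (rule DERIV_cong)
     apply (auto intro!: derivative_eq_intros ch)[1]
    using G apply simp
    using G apply (cases k; simp add: field_simps numeral_2_eq_2 power2_eq_square)
    done
  have q2pos: "q2 t \<ge> 0" if t: "t > 0" for t
  proof -
    define y where "y = X*t"
    have e1: "X^2 * D 2 (X * t) * t^(k+2) = t^k * (y^2 * D 2 y)"
      by (simp add: y_def power2_eq_square power_add field_simps)
    have e2: "2 * X * D 1 (X * t) * ((real k+2) * t^(k+1)) = t^k * (2*(real k+2) * (y * D 1 y))"
      by (simp add: y_def power_add field_simps)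
    have "y^2 * D 2 y \<ge> - G/5" using d2[of y] by linarith
    moreover have "2*(real k+2) * (y * D 1 y) \<ge> 2*(real k+2) * (-G/5)"
      using d1[of y] by (intro mult_left_mono) auto
    moreover have "((real k+2)*(real k+1)) * D 0 y \<ge> ((real k+2)*(real k+1)) * (9/10*G)"
      using bd[of y] by (intro mult_left_mono) auto
    moreover have "((real k+2)*(real k+1)) * (9/10*G) \<ge> G/5 - 2*(real k+2) * (-G/5)"
    proof -
      have "0 \<le> real k * real k" by simp
      moreover have "(real k+2)*(real k+1)*(9/10) - (1/5 + 2*(real k+2)/5) = 9/10*(real k*real k) + 23/10*real k + 4/5"
        by (simp add: field_simps)
      ultimately have "(real k+2)*(real k+1)*(9/10) \<ge> 1/5 + 2*(real k+2)/5" by linarith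
      hence "(real k+2)*(real k+1)*(9/10) * G \<ge> (1/5 + 2*(real k+2)/5) * G"
        using G by (intro mult_right_mono) auto
      thus ?thesis by (simp add: field_simps)
    qed
    ultimately have "y^2 * D 2 y + 2*(real k+2) * (y * D 1 y) + ((real k+2)*(real k+1)) * D 0 y \<ge> 0"
      by linarith
    hence nn: "t^k * (y^2 * D 2 y + 2*(real k+2) * (y * D 1 y) + ((real k+2)*(real k+1)) * D 0 y) \<ge> 0"
      using t by simp
    have "G * q2 t = X^2 * D 2 (X * t) * t^(k+2) + 2 * X * D 1 (X * t) * ((real k+2) * t^(k+1))
      + D 0 (X * t) * ((real k+2)*(real k+1)*t^k)" unfolding q2_def using G by simp
    also have "\<dots> = t^k * (y^2 * D 2 y) + t^k * (2*(real k+2) * (y * D 1 y)) + D 0 y * ((real k+2)*(real k+1)*t^k)"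
      by (simp only: e1 e2 y_def)
    also have "\<dots> = t^k * (y^2 * D 2 y + 2*(real k+2) * (y * D 1 y) + ((real k+2)*(real k+1)) * D 0 y)"
      by (simp add: algebra_simps)
    finally have "G * q2 t \<ge> 0" using nn by simp
    thus ?thesis using G by (simp add: zero_le_mult_iff)
  qed
  have q1neg: "q1 t \<le> 0" if "c \<le> t" "t \<le> s" for t
  proof -
    have "q1 t \<le> q1 s"
      by (rule DERIV_nonneg_imp_nondecreasing[OF that(2)])
        (use dq1 q2pos c that in \<open>auto intro!: exI\<close>)
    thus ?thesis using crit by (simp add: q1_def)
  qed
  have "q s \<le> q c"
    by (rule DERIV_nonpos_imp_nonincreasing[OF c(2)]) (use dq q1neg in \<open>auto intro!: exI\<close>)
  thus ?thesis by (simp add: q_def)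
qed
theorem lemma6p7:
  fixes m :: nat and g gt \<alpha> :: "real \<Rightarrow> real" and \<delta> :: real
  assumes m: "m \<ge> 2"
    and g_smooth: "smooth_on UNIV g" and g0: "g 0 > 0"
    and gt_smooth: "smooth_on UNIV gt"
    and \<delta>: "0 < \<delta>" "\<delta> < 1"
    and gt_near: "\<And>x. \<bar>x\<bar> \<le> \<delta> \<Longrightarrow> gt x = g x"
    and gt_far: "\<And>x. \<bar>x\<bar> \<ge> 1 \<Longrightarrow> gt x = 9/10 * g 0"
    and gt_d1: "\<And>x. 0 \<le> - x * deriv gt x \<and> - x * deriv gt x < g 0 / 5"
    and gt_d2: "\<And>x. \<bar>x^2 * deriv (deriv gt) x\<bar> < g 0 / 5"
    and gt_bounds: "\<And>x. 9/10 * g 0 \<le> gt x \<and> gt x \<le> g 0"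
    and \<alpha>_smooth: "smooth_on {0..} \<alpha>"
    and \<alpha>_crit: "\<And>X. X \<ge> 0 \<Longrightarrow>
        deriv (\<lambda>s. gt (X * s) / g 0 * s ^ (2*m) - s) (\<alpha> X) = 0"
    and \<alpha>_bounds: "\<And>X. X \<ge> 0 \<Longrightarrow>
        (2 * real m) powr (- 1 / (2 * real m - 1)) \<le> \<alpha> X \<and>
        \<alpha> X \<le> (4/5 * (2 * real m)) powr (- 1 / (2 * real m - 1))"
  shows "\<forall>X \<ge> 0.
      (let a = (\<lambda>Y. - (gt (Y * \<alpha> Y) / g 0 * \<alpha> Y ^ (2*m) - \<alpha> Y)) in
        a X \<ge> a 0 \<and>
        a 0 = (2 * real m) powr (- 1 / (2 * real m - 1))
              - (2 * real m) powr (- (2 * real m) / (2 * real m - 1)))"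
proof (intro allI impI)
  fix X :: real assume X: "X \<ge> 0"
  from gt_smooth obtain D where D0: "D 0 = gt" and
    Dw: "\<forall>n. \<forall>x\<in>UNIV. (D n has_real_derivative D (Suc n) x) (at x within UNIV)"
    unfolding smooth_on_def by blast
  have D: "\<And>n x. (D n has_real_derivative D (Suc n) x) (at x)" using Dw by simp
  have dD: "deriv (D n) = D (Suc n)" for n using D DERIV_imp_deriv by blast
  have dgt: "deriv gt = D 1" using dD[of 0] D0 by simp
  have ddgt: "deriv (deriv gt) = D 2" using dD[of 1] dgt by (simp add: numeral_2_eq_2)
  define G where "G = g 0"
  have G: "G > 0" using g0 G_def by simp
  have gt0: "gt 0 = G" using gt_near[of 0] \<delta> G_def by simp
  define k where "k = 2*m - 2"
  have k: "2*m = k+2" using m k_def by simp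
  define M where "M = 2 * real m"
  have Mk: "M = real k + 2" using m k_def M_def by simp
  have Mk1: "M - 1 = real k + 1" using Mk by simp
  define c where "c = M powr (- 1 / (M - 1))"
  have cpos: "c > 0" using Mk by (simp add: c_def)
  have d1: "\<And>y. 0 \<le> - y * D 1 y \<and> - y * D 1 y < G / 5" using gt_d1 dgt G_def by simp
  have d2: "\<And>y. \<bar>y^2 * D 2 y\<bar> < G / 5" using gt_d2 ddgt G_def by simp
  have bd: "\<And>y. 9/10 * G \<le> D 0 y" using gt_bounds D0 G_def by simp
  have dq: "((\<lambda>s. gt (Y * s) / g 0 * s ^ (2*m) - s) has_real_derivative
      (Y * D 1 (Y * s) * s^(k+2) + D 0 (Y * s) * ((real k+2) * s^(k+1)))/G - 1) (at s)" for Y s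
    unfolding k G_def[symmetric] D0[symmetric] by (rule dq_lem[where D=D, OF D G])
  have crit: "(Y * D 1 (Y * \<alpha> Y) * \<alpha> Y^(k+2) + D 0 (Y * \<alpha> Y) * ((real k+2) * \<alpha> Y^(k+1)))/G - 1 = 0"
    if "Y \<ge> 0" for Y
    using \<alpha>_crit[OF that] DERIV_imp_deriv[OF dq[of Y "\<alpha> Y"]] by simp
  have bnds: "c \<le> \<alpha> Y" if "Y \<ge> 0" for Y using \<alpha>_bounds[OF that] by (simp add: c_def M_def)
  have a0: "\<alpha> 0 = c"
  proof -
    have "D 0 0 = G" using gt0 D0 by simp
    hence "G * ((real k+2) * \<alpha> 0^(k+1)) / G = 1" using crit[of 0] by (simp del: power_Suc add: add.commute)
    hence "(real k+2) * \<alpha> 0^(k+1) = 1" using G by simp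
    hence e: "\<alpha> 0^(k+1) = 1 / M" using Mk by (simp add: field_simps)
    have "c^(k+1) = c powr (real (k+1))" using powr_realpow[OF cpos, of "k+1"] by simp
    also have "\<dots> = M powr (- 1 / (M - 1) * real (k+1))" unfolding c_def powr_powr ..
    also have "- 1 / (M - 1) * real (k+1) = - 1" using Mk1 by simp
    hence "M powr (- 1 / (M - 1) * real (k+1)) = M powr (- 1)" by simp
    also have "\<dots> = 1 / M" using Mk by (simp add: powr_minus divide_inverse)
    finally have "c^(k+1) = \<alpha> 0^(k+1)" using e by simp
    hence "c^Suc k = \<alpha> 0^Suc k" by simp
    from power_inject_base[OF this] show ?thesis using cpos bnds[of 0] by simp
  qed
  have cpow: "c ^ (2*m) = M powr (- M / (M - 1))"
  proof -
    have "c ^ (2*m) = c powr M" using powr_realpow[OF cpos, of "2*m"] M_def by simp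
    also have "\<dots> = M powr (- M / (M - 1))" unfolding c_def powr_powr by simp
    finally show ?thesis .
  qed
  have key: "D 0 (X * \<alpha> X)/G * \<alpha> X^(k+2) - \<alpha> X \<le> D 0 (X * c)/G * c^(k+2) - c"
    by (rule conv[OF D G X cpos bnds[OF X] d1 d2 bd crit[OF X]])
  have "D 0 (X * c)/G * c^(k+2) \<le> c^(k+2)"
  proof -
    have "D 0 (X * c)/G \<le> 1" using gt_bounds[of "X * c"] D0 G G_def by simp
    from mult_right_mono[OF this, of "c^(k+2)"] show ?thesis using cpos by simp
  qed
  hence aX: "- (gt (X * \<alpha> X) / g 0 * \<alpha> X ^ (2*m) - \<alpha> X) \<ge> c - c^(2*m)"
    using key unfolding k G_def[symmetric] D0[symmetric] by linarith
  have aZ: "- (gt (0 * \<alpha> 0) / g 0 * \<alpha> 0 ^ (2*m) - \<alpha> 0) = c - c^(2*m)"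
    using gt0 G G_def a0 by simp
  show "let a = (\<lambda>Y. - (gt (Y * \<alpha> Y) / g 0 * \<alpha> Y ^ (2*m) - \<alpha> Y)) in
        a X \<ge> a 0 \<and>
        a 0 = (2 * real m) powr (- 1 / (2 * real m - 1))
              - (2 * real m) powr (- (2 * real m) / (2 * real m - 1))"
    unfolding Let_def using aX aZ cpow by (simp add: c_def M_def)
qed

end
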